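(* Let $1\le m\le n$, $\boldsymbol{\theta}^*\in\mathbb{R}^{m+n-1}$ and $X\sim\mathbb{P}_{\boldsymbol{\theta}^*}$. Let $V$ be the Fisher information matrix and $S$ the matrix defined below, both evaluated at $\boldsymbol{\theta}^*$, let $R=V^{-1}-S$ and $U=\mathrm{Cov}[R\{\mathbf{g}-\mathbb{E}\mathbf{g}\}]$. Then \[ \|U\|\le\|V^{-1}-S\|+\frac{3(1+e^{2\|\boldsymbol{\theta}^*\|_\infty})^4}{4mn\,e^{4\|\boldsymbol{\theta}^*\|_\infty}}, \] where $\|A\|:=\max_{i,j}|a_{i,j}|$.
   Context: Affiliation network model: $X=(x_{i,j})$ is an $m\times n$ $\{0,1\}$-matrix; parameters $\alpha_1,\dots,\alpha_m,\beta_1,\dots,\beta_n$ with $\beta_n=0$, $\boldsymbol{\theta}=(\alpha_1,\dots,\alpha_m,\beta_1,\dots,\beta_{n-1})^\top$; under $\mathbb{P}_{\boldsymbol{\theta}}$ the $x_{i,j}$ are independent Bernoulli with success probability $e^{\alpha_i+\beta_j}/(1+e^{\alpha_i+\beta_j})$. $d_i=\sum_j x_{i,j}$, $b_j=\sum_i x_{i,j}$, $\mathbf{g}=(d_1,\dots,d_m,b_1,\dots,b_{n-1})^\top$. Write $u_{i,j}=e^{\alpha_i+\beta_j}/(1+e^{\alpha_i+\beta_j})^2$. The Fisher information $V=(v_{k,l})$ is the $(m+n-1)\times(m+n-1)$ symmetric matrix with $v_{i,i}=\sum_{j=1}^n u_{i,j}$ ($i\le m$), $v_{m+j,m+j}=\sum_{i=1}^m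 u_{i,j}$ ($j\le n-1$), $v_{i,m+j}=v_{m+j,i}=u_{i,j}$ ($i\le m$, $j\le n-1$), and all other entries zero; also set $v_{m+n,m+n}=\sum_{i=1}^m u_{i,n}$. $S=(s_{k,l})$: $s_{k,l}=\frac{\delta_{k,l}}{v_{k,k}}+\frac{1}{v_{m+n,m+n}}$ if $k,l\in\{1,\dots,m\}$ or $k,l\in\{m+1,\dots,m+n-1\}$, and $s_{k,l}=-\frac{1}{v_{m+n,m+n}}$ otherwise. *)

theory Defs
  imports Complex_Main
begin

text \<open>Indices are 0-based: rows i < m, columns j < n.
  The parameter vector theta has length m+n-1: alpha_i = theta i (i < m),
  beta_j = theta (m+j) (j < n-1), and beta_(n-1) = 0.
  Matrices of size N are functions nat => nat => real, only entries i,j < N matter.\<close>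

definition alpha :: "(nat \<Rightarrow> real) \<Rightarrow> nat \<Rightarrow> real" where
  "alpha theta i = theta i"

definition beta :: "nat \<Rightarrow> nat \<Rightarrow> (nat \<Rightarrow> real) \<Rightarrow> nat \<Rightarrow> real" where
  "beta m n theta j = (if j < n - 1 then theta (m + j) else 0)"

definition pij :: "nat \<Rightarrow> nat \<Rightarrow> (nat \<Rightarrow> real) \<Rightarrow> nat \<Rightarrow> nat \<Rightarrow> real" where
  "pij m n theta i j = exp (alpha theta i + beta m n theta j) / (1 + exp (alpha theta i + beta m n theta j))"

definition uij :: "nat \<Rightarrow> nat \<Rightarrow> (nat \<Rightarrow> real) \<Rightarrow> nat \<Rightarrow> nat \<Rightarrow> real" where
  "uij m n theta i j = exp (alpha theta i + beta m n theta j) / (1 + exp (alpha theta i + beta m n theta j))^2"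

definition fisherV :: "nat \<Rightarrow> nat \<Rightarrow> (nat \<Rightarrow> real) \<Rightarrow> nat \<Rightarrow> nat \<Rightarrow> real" where
  "fisherV m n theta k l =
     (if k < m \<and> l < m then (if k = l then (\<Sum>j<n. uij m n theta k j) else 0)
      else if k < m \<and> m \<le> l \<and> l < m + n - 1 then uij m n theta k (l - m)
      else if m \<le> k \<and> k < m + n - 1 \<and> l < m then uij m n theta l (k - m)
      else if m \<le> k \<and> k < m + n - 1 \<and> m \<le> l \<and> l < m + n - 1 then
        (if k = l then (\<Sum>i<m. uij m n theta i (k - m)) else 0)
      else 0)"

text \<open>v_{m+n,m+n} = sum_i u_{i,n}  (0-based column n-1).\<close>
definition vlast :: "nat \<Rightarrow> nat \<Rightarrow> (nat \<Rightarrow> real) \<Rightarrow> real" where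
  "vlast m n theta = (\<Sum>i<m. uij m n theta i (n - 1))"

definition approxS :: "nat \<Rightarrow> nat \<Rightarrow> (nat \<Rightarrow> real) \<Rightarrow> nat \<Rightarrow> nat \<Rightarrow> real" where
  "approxS m n theta k l =
     (if k < m + n - 1 \<and> l < m + n - 1 then
        (if (k < m \<and> l < m) \<or> (m \<le> k \<and> m \<le> l)
         then (if k = l then 1 / fisherV m n theta k k else 0) + 1 / vlast m n theta
         else - 1 / vlast m n theta)
      else 0)"

definition mat_inv :: "nat \<Rightarrow> (nat \<Rightarrow> nat \<Rightarrow> real) \<Rightarrow> nat \<Rightarrow> nat \<Rightarrow> real" where
  "mat_inv N A = (THE W. (\<forall>i<N. \<forall>j<N. (\<Sum>k<N. A i k * W k j) = (if i = j then 1 else 0)) \<and>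
                        (\<forall>i<N. \<forall>j<N. (\<Sum>k<N. W i k * A k j) = (if i = j then 1 else 0)) \<and>
                        (\<forall>i j. \<not> (i < N \<and> j < N) \<longrightarrow> W i j = 0))"

definition max_norm :: "nat \<Rightarrow> (nat \<Rightarrow> nat \<Rightarrow> real) \<Rightarrow> real" where
  "max_norm N A = Max {\<bar>A i j\<bar> | i j. i < N \<and> j < N}"

definition sup_norm :: "nat \<Rightarrow> (nat \<Rightarrow> real) \<Rightarrow> real" where
  "sup_norm N x = Max {\<bar>x i\<bar> | i. i < N}"

definition adj_space :: "nat \<Rightarrow> nat \<Rightarrow> (nat \<Rightarrow> nat \<Rightarrow> bool) set" where
  "adj_space m n = {X. \<forall>i j. \<not> (i < m \<and> j < n) \<longrightarrow> \<not> X i j}"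

definition prob_X :: "nat \<Rightarrow> nat \<Rightarrow> (nat \<Rightarrow> real) \<Rightarrow> (nat \<Rightarrow> nat \<Rightarrow> bool) \<Rightarrow> real" where
  "prob_X m n theta X = (\<Prod>i<m. \<Prod>j<n. if X i j then pij m n theta i j else 1 - pij m n theta i j)"

definition expect :: "nat \<Rightarrow> nat \<Rightarrow> (nat \<Rightarrow> real) \<Rightarrow> ((nat \<Rightarrow> nat \<Rightarrow> bool) \<Rightarrow> real) \<Rightarrow> real" where
  "expect m n theta f = (\<Sum>X\<in>adj_space m n. prob_X m n theta X * f X)"

definition degvec :: "nat \<Rightarrow> nat \<Rightarrow> (nat \<Rightarrow> nat \<Rightarrow> bool) \<Rightarrow> nat \<Rightarrow> real" where
  "degvec m n X k =
     (if k < m then (\<Sum>j<n. if X k j then 1 else 0)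
      else if k < m + n - 1 then (\<Sum>i<m. if X i (k - m) then 1 else 0)
      else 0)"

definition cov_mat :: "nat \<Rightarrow> nat \<Rightarrow> (nat \<Rightarrow> real) \<Rightarrow> ((nat \<Rightarrow> nat \<Rightarrow> bool) \<Rightarrow> nat \<Rightarrow> real)
                         \<Rightarrow> nat \<Rightarrow> nat \<Rightarrow> real" where
  "cov_mat m n theta Y k l =
     expect m n theta (\<lambda>X. Y X k * Y X l) - expect m n theta (\<lambda>X. Y X k) * expect m n theta (\<lambda>X. Y X l)"

end

theory Submission
  imports Defs "HOL-Library.FuncSet" "Jordan_Normal_Form.Determinant"
begin


lemma bij_adj:
  "bij_betw (\<lambda>X. restrict (\<lambda>c. X (fst c) (snd c)) ({..<m}\<times>{..<n})) (adj_space m n)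
     (PiE ({..<m}\<times>{..<n}) (\<lambda>_. UNIV))"
proof (rule bij_betw_byWitness[where f'="\<lambda>g i j. if (i,j) \<in> {..<m}\<times>{..<n} then g (i,j) else False"])
  show "\<forall>a\<in>adj_space m n. (\<lambda>i j. if (i, j) \<in> {..<m} \<times> {..<n} then restrict (\<lambda>c. a (fst c) (snd c)) ({..<m} \<times> {..<n}) (i, j) else False) = a"
    by (auto simp: adj_space_def fun_eq_iff)
  show "\<forall>a'\<in>PiE ({..<m}\<times>{..<n}) (\<lambda>_. UNIV). restrict (\<lambda>c. (\<lambda>i j. if (i, j) \<in> {..<m} \<times> {..<n} then a' (i, j) else False) (fst c) (snd c)) ({..<m} \<times> {..<n}) = a'"
    by (auto simp: fun_eq_iff PiE_def extensional_def)
  show "(\<lambda>X. restrict (\<lambda>c. X (fst c) (snd c)) ({..<m}\<times>{..<n})) ` adj_space m n \<subseteq> PiE ({..<m}\<times>{..<n}) (\<lambda>_. UNIV)"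
    by auto
  show "(\<lambda>g i j. if (i,j) \<in> {..<m}\<times>{..<n} then g (i,j) else False) ` PiE ({..<m}\<times>{..<n}) (\<lambda>_. UNIV) \<subseteq> adj_space m n"
    by (auto simp: adj_space_def)
qed

lemma prod_expect:
  "expect m n th (\<lambda>X. \<Prod>i<m. \<Prod>j<n. q i j (X i j)) =
   (\<Prod>i<m. \<Prod>j<n. pij m n th i j * q i j True + (1 - pij m n th i j) * q i j False)"
proof -
  let ?G = "{..<m}\<times>{..<n}"
  define H where "H c b = (if b then pij m n th (fst c) (snd c) else 1 - pij m n th (fst c) (snd c)) * q (fst c) (snd c) b" for c b
  have "expect m n th (\<lambda>X. \<Prod>i<m. \<Prod>j<n. q i j (X i j)) =
     (\<Sum>X\<in>adj_space m n. \<Prod>c\<in>?G. H c (X (fst c) (snd c)))"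
    unfolding expect_def prob_X_def H_def
    by (simp add: prod.distrib[symmetric] prod.cartesian_product case_prod_beta)
  also have "\<dots> = (\<Sum>X\<in>adj_space m n. \<Prod>c\<in>?G. H c (restrict (\<lambda>c. X (fst c) (snd c)) ?G c))"
    by (intro sum.cong prod.cong) auto
  also have "\<dots> = (\<Sum>g\<in>PiE ?G (\<lambda>_. UNIV). \<Prod>c\<in>?G. H c (g c))"
    using sum.reindex_bij_betw[OF bij_adj, of "\<lambda>g. \<Prod>c\<in>?G. H c (g c)" m n] by simp
  also have "\<dots> = (\<Prod>c\<in>?G. \<Sum>b\<in>UNIV. H c b)"
    by (rule prod_sum_PiE[symmetric]) auto
  also have "\<dots> = (\<Prod>c\<in>?G. H c True + H c False)"
    by (simp add: UNIV_bool add.commute)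
  also have "\<dots> = (\<Prod>i<m. \<Prod>j<n. pij m n th i j * q i j True + (1 - pij m n th i j) * q i j False)"
    by (simp add: prod.cartesian_product H_def case_prod_beta)
  finally show ?thesis .
qed

lemma prod_expect_cell:
  "expect m n th (\<lambda>X. \<Prod>c\<in>{..<m}\<times>{..<n}. Q c (X (fst c) (snd c))) =
   (\<Prod>c\<in>{..<m}\<times>{..<n}. pij m n th (fst c) (snd c) * Q c True + (1 - pij m n th (fst c) (snd c)) * Q c False)"
  using prod_expect[of m n th "\<lambda>i j. Q (i,j)"]
  by (simp add: prod.cartesian_product case_prod_beta)

lemma expect_const: "expect m n th (\<lambda>X. 1) = 1"
  using prod_expect_cell[of m n th "\<lambda>c b. 1"] by simp

lemma expect_ind:
  assumes "a < m" "b < n"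
  shows "expect m n th (\<lambda>X. if X a b then 1 else 0) = pij m n th a b"
proof -
  have "expect m n th (\<lambda>X. if X a b then 1 else 0) =
    expect m n th (\<lambda>X. \<Prod>c\<in>{..<m}\<times>{..<n}. (if c = (a,b) then (if X (fst c) (snd c) then 1 else 0) else 1))"
    using assms by (simp add: prod.delta)
  also have "\<dots> = (\<Prod>c\<in>{..<m}\<times>{..<n}. (if c = (a,b) then pij m n th a b else 1))"
    by (subst prod_expect_cell) (intro prod.cong, auto)
  also have "\<dots> = pij m n th a b" using assms by (simp add: prod.delta)
  finally show ?thesis .
qed

lemma expect_ind2:
  assumes "a < m" "b < n" "a' < m" "b' < n" "(a,b) \<noteq> (a',b')"
  shows "expect m n th (\<lambda>X. (if X a b then 1 else 0) * (if X a' b' then 1 else 0)) = pij m n th a b * pij m n th a' b'"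
proof -
  have "expect m n th (\<lambda>X. (if X a b then 1 else 0) * (if X a' b' then 1 else 0)) =
    expect m n th (\<lambda>X. \<Prod>c\<in>{..<m}\<times>{..<n}. (if c = (a,b) then (if X (fst c) (snd c) then 1 else 0) else 1)
        * (if c = (a',b') then (if X (fst c) (snd c) then 1 else 0) else 1))"
    using assms by (simp add: prod.distrib prod.delta)
  also have "\<dots> = (\<Prod>c\<in>{..<m}\<times>{..<n}. (if c = (a,b) then pij m n th a b else 1) * (if c = (a',b') then pij m n th a' b' else 1))"
    by (subst prod_expect_cell) (intro prod.cong, use assms in auto)
  also have "\<dots> = pij m n th a b * pij m n th a' b'" using assms by (simp add: prod.distrib prod.delta)
  finally show ?thesis .
qed

lemma expect_sum: "expect m n th (\<lambda>X. \<Sum>s\<in>A. f s X) = (\<Sum>s\<in>A. expect m n th (f s))"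
  unfolding expect_def by (simp add: sum_distrib_left sum.swap[of _ A])

lemma expect_add: "expect m n th (\<lambda>X. f X + g X) = expect m n th f + expect m n th g"
  unfolding expect_def by (simp add: algebra_simps sum.distrib)

lemma expect_diff: "expect m n th (\<lambda>X. f X - g X) = expect m n th f - expect m n th g"
  unfolding expect_def by (simp add: algebra_simps sum_subtractf)

lemma expect_cmult: "expect m n th (\<lambda>X. a * f X) = a * expect m n th f"
  unfolding expect_def sum_distrib_left by (rule sum.cong) auto

lemma expect_constant: "expect m n th (\<lambda>X. a) = a"
  using expect_cmult[of m n th a "\<lambda>X. 1"] expect_const[of m n th] by simp

lemma expect_cmult2: "expect m n th (\<lambda>X. f X * a) = expect m n th f * a"
  unfolding expect_def sum_distrib_right by (rule sum.cong) auto

lemma pij_u: "pij m n th i j * (1 - pij m n th i j) = uij m n th i j"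
proof -
  define e where "e = exp (alpha th i + beta m n th j)"
  have "e > 0" by (simp add: e_def)
  then show ?thesis unfolding pij_def uij_def e_def[symmetric]
    by (simp add: field_simps power2_eq_square)
qed

definition yc :: "nat \<Rightarrow> nat \<Rightarrow> (nat \<Rightarrow> real) \<Rightarrow> nat \<times> nat \<Rightarrow> (nat \<Rightarrow> nat \<Rightarrow> bool) \<Rightarrow> real" where
  "yc m n th c X = (if X (fst c) (snd c) then 1 else 0) - pij m n th (fst c) (snd c)"

lemma expect_yc: "c \<in> {..<m}\<times>{..<n} \<Longrightarrow> expect m n th (yc m n th c) = 0"
  unfolding yc_def
  by (cases c) (simp add: expect_diff expect_ind expect_constant)

lemma expect_yc2:
  assumes "c \<in> {..<m}\<times>{..<n}" "c' \<in> {..<m}\<times>{..<n}"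
  shows "expect m n th (\<lambda>X. yc m n th c X * yc m n th c' X) = (if c = c' then uij m n th (fst c) (snd c) else 0)"
proof -
  obtain a b a' b' where c: "c = (a,b)" "c' = (a',b')" by (cases c, cases c')
  let ?p = "pij m n th a b" and ?p' = "pij m n th a' b'"
  have E1: "expect m n th (\<lambda>X. 1) = 1" by (rule expect_const)
  have "(\<lambda>X. yc m n th c X * yc m n th c' X) = (\<lambda>X. ((if X a b then 1 else 0) * (if X a' b' then 1 else 0)
       - ?p' * (if X a b then 1 else 0)) - (?p * (if X a' b' then 1 else 0) - ?p * ?p' * 1))"
    by (simp add: yc_def c fun_eq_iff algebra_simps)
  hence eq: "expect m n th (\<lambda>X. yc m n th c X * yc m n th c' X) =
     expect m n th (\<lambda>X. (if X a b then 1 else 0) * (if X a' b' then 1 else 0)) - ?p' * ?p - (?p * ?p' - ?p * ?p')"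
    using assms c by (simp add: expect_diff expect_cmult expect_ind E1 expect_constant)
  show ?thesis
  proof (cases "c = c'")
    case True
    hence "(\<lambda>X. (if X a b then 1 else 0) * (if X a' b' then 1 else 0)) = (\<lambda>X. (if X a b then 1 else (0::real)))"
      using c by auto
    then show ?thesis using eq assms c True pij_u[of m n th a b] by (simp add: expect_ind algebra_simps)
  next
    case False
    then show ?thesis using eq assms c by (auto simp add: expect_ind2)
  qed
qed



definition iota :: "nat \<Rightarrow> nat \<Rightarrow> nat \<times> nat \<Rightarrow> nat \<Rightarrow> real" where
  "iota m n c r = (if r = fst c then 1 else 0) + (if snd c < n - 1 \<and> r = m + snd c then 1 else 0)"

lemma mult_ind_r: "(x::real) * (if P then 1 else 0) = (if P then x else 0)" by simp
lemma mult_ind_l: "(if P then 1 else 0) * (x::real) = (if P then x else 0)" by simp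

lemma iota_low: "k < m \<Longrightarrow> iota m n (i,j) k = (if k = i then 1 else 0)"
  by (simp add: iota_def)

lemma iota_high: "m \<le> k \<Longrightarrow> k < m + n - 1 \<Longrightarrow> i < m \<Longrightarrow> j < n \<Longrightarrow> iota m n (i,j) k = (if j = k - m then 1 else 0)"
  by (auto simp add: iota_def)

lemma degvec_iota:
  assumes "l < m + n - 1"
  shows "degvec m n X l = (\<Sum>c\<in>{..<m}\<times>{..<n}. iota m n c l * (if X (fst c) (snd c) then 1 else 0))"
proof (cases "l < m")
  case True
  have "(\<Sum>c\<in>{..<m}\<times>{..<n}. iota m n c l * (if X (fst c) (snd c) then 1 else 0))
     = (\<Sum>i<m. \<Sum>j<n. (if l = i then 1 else 0) * (if X i j then 1 else 0))"
    unfolding sum.cartesian_product by (intro sum.cong refl) (auto simp: iota_low[OF True])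
  also have "\<dots> = (\<Sum>i<m. if l = i then (\<Sum>j<n. (if X i j then 1 else 0)) else 0)"
    by (intro sum.cong) auto
  also have "\<dots> = degvec m n X l" using True by (simp add: degvec_def)
  finally show ?thesis by simp
next
  case False
  have "(\<Sum>c\<in>{..<m}\<times>{..<n}. iota m n c l * (if X (fst c) (snd c) then 1 else 0))
     = (\<Sum>i<m. \<Sum>j<n. (if j = l - m then 1 else 0) * (if X i j then 1 else 0))"
    unfolding sum.cartesian_product using False assms by (intro sum.cong refl) (auto simp: iota_high)
  also have "\<dots> = (\<Sum>i<m. \<Sum>j<n. (if j = l - m then (if X i (l - m) then 1 else 0) else 0))"
    by (intro sum.cong refl) auto
  also have "\<dots> = (\<Sum>i<m. (if X i (l - m) then 1 else 0))"
  proof -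
    have "l - m < n" using False assms by arith
    then show ?thesis by (intro sum.cong refl) (simp add: sum.delta')
  qed
  also have "\<dots> = degvec m n X l" using False assms by (simp add: degvec_def)
  finally show ?thesis by simp
qed

lemma fisherV_iota:
  assumes "k < m + n - 1" "l < m + n - 1"
  shows "fisherV m n th k l = (\<Sum>c\<in>{..<m}\<times>{..<n}. uij m n th (fst c) (snd c) * iota m n c k * iota m n c l)"
proof -
  have S: "(\<Sum>c\<in>{..<m}\<times>{..<n}. uij m n th (fst c) (snd c) * iota m n c k * iota m n c l)
    = (\<Sum>i<m. \<Sum>j<n. uij m n th i j * iota m n (i,j) k * iota m n (i,j) l)"
    unfolding sum.cartesian_product by (simp add: case_prod_beta)
  show ?thesis
  proof (cases "k < m")
    case k: True
    show ?thesis
    proof (cases "l < m")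
      case l: True
      have "(\<Sum>i<m. \<Sum>j<n. uij m n th i j * iota m n (i,j) k * iota m n (i,j) l)
        = (\<Sum>i<m. if i = k then (if k = l then (\<Sum>j<n. uij m n th i j) else 0) else 0)"
        using k l by (intro sum.cong) (auto simp: iota_low)
      then show ?thesis using k l S by (simp add: fisherV_def mult_ind_r)
    next
      case l: False
      have "(\<Sum>i<m. \<Sum>j<n. uij m n th i j * iota m n (i,j) k * iota m n (i,j) l)
        = (\<Sum>i<m. if i = k then (\<Sum>j<n. if j = l - m then uij m n th i j else 0) else 0)"
        using k l assms by (intro sum.cong) (auto simp: iota_low iota_high mult_ind_r)
      also have "\<dots> = uij m n th k (l - m)"
      proof -
        have "l - m < n" using k l assms by arith
        then show ?thesis using k by (simp add: sum.delta')
      qed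
      finally show ?thesis using k l S assms by (simp add: fisherV_def mult_ind_r)
    qed
  next
    case k: False
    show ?thesis
    proof (cases "l < m")
      case l: True
      have "(\<Sum>i<m. \<Sum>j<n. uij m n th i j * iota m n (i,j) k * iota m n (i,j) l)
        = (\<Sum>i<m. if i = l then (\<Sum>j<n. if j = k - m then uij m n th i j else 0) else 0)"
        using k l assms by (intro sum.cong) (auto simp: iota_low iota_high mult_ind_r)
      also have "\<dots> = uij m n th l (k - m)"
      proof -
        have "k - m < n" using k l assms by arith
        then show ?thesis using l by (simp add: sum.delta')
      qed
      finally show ?thesis using k l S assms by (simp add: fisherV_def mult_ind_r)
    next
      case l: False
      have "(\<Sum>i<m. \<Sum>j<n. uij m n th i j * iota m n (i,j) k * iota m n (i,j) l)
        = (\<Sum>i<m. if k = l then uij m n th i (k - m) else 0)"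
      proof -
        have f: "k - m < n" "(k - m = l - m) = (k = l)" using k l assms by arith+
        show ?thesis using k l assms f by (intro sum.cong refl) (auto simp: iota_high mult_ind_r)
      qed
      then show ?thesis using k l S assms by (auto simp add: fisherV_def)
    qed
  qed
qed

lemma triple_prod: "(u::real) * (\<Sum>r\<in>A. f r) * (\<Sum>s\<in>B. g s) = (\<Sum>r\<in>A. \<Sum>s\<in>B. u * f r * g s)"
proof -
  have "u * (\<Sum>r\<in>A. f r) * (\<Sum>s\<in>B. g s) = u * ((\<Sum>r\<in>A. f r) * (\<Sum>s\<in>B. g s))" by (simp add: mult.assoc)
  also have "\<dots> = u * (\<Sum>r\<in>A. \<Sum>s\<in>B. f r * g s)" by (simp add: sum_product)
  also have "\<dots> = (\<Sum>r\<in>A. \<Sum>s\<in>B. u * (f r * g s))" by (simp add: sum_distrib_left)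
  finally show ?thesis by (simp add: mult.assoc)
qed

lemma quadform:
  "(\<Sum>r<m+n-1. \<Sum>s<m+n-1. A r * fisherV m n th r s * B s) =
   (\<Sum>c\<in>{..<m}\<times>{..<n}. uij m n th (fst c) (snd c) * (\<Sum>r<m+n-1. A r * iota m n c r) * (\<Sum>s<m+n-1. B s * iota m n c s))"
proof -
  have "(\<Sum>r<m+n-1. \<Sum>s<m+n-1. A r * fisherV m n th r s * B s) =
     (\<Sum>r<m+n-1. \<Sum>s<m+n-1. \<Sum>c\<in>{..<m}\<times>{..<n}. A r * (uij m n th (fst c) (snd c) * iota m n c r * iota m n c s) * B s)"
    by (intro sum.cong refl) (simp add: fisherV_iota sum_distrib_left sum_distrib_right)
  also have "\<dots> = (\<Sum>c\<in>{..<m}\<times>{..<n}. \<Sum>r<m+n-1. \<Sum>s<m+n-1. uij m n th (fst c) (snd c) * (A r * iota m n c r) * (B s * iota m n c s))"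
  proof -
    have "(\<Sum>r<m+n-1. \<Sum>s<m+n-1. \<Sum>c\<in>{..<m}\<times>{..<n}. A r * (uij m n th (fst c) (snd c) * iota m n c r * iota m n c s) * B s)
      = (\<Sum>r<m+n-1. \<Sum>c\<in>{..<m}\<times>{..<n}. \<Sum>s<m+n-1. A r * (uij m n th (fst c) (snd c) * iota m n c r * iota m n c s) * B s)"
      by (intro sum.cong refl) (rule sum.swap)
    also have "\<dots> = (\<Sum>c\<in>{..<m}\<times>{..<n}. \<Sum>r<m+n-1. \<Sum>s<m+n-1. A r * (uij m n th (fst c) (snd c) * iota m n c r * iota m n c s) * B s)"
      by (rule sum.swap)
    finally show ?thesis by (simp add: ac_simps)
  qed
  also have "\<dots> = (\<Sum>c\<in>{..<m}\<times>{..<n}. uij m n th (fst c) (snd c) * (\<Sum>r<m+n-1. A r * iota m n c r) * (\<Sum>s<m+n-1. B s * iota m n c s))"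
    by (intro sum.cong refl) (simp only: triple_prod)
  finally show ?thesis .
qed

lemma cov_formula:
  fixes m n :: nat and R :: "nat \<Rightarrow> nat \<Rightarrow> real"
  defines "N \<equiv> m + n - 1"
  shows "cov_mat m n th (\<lambda>X k. \<Sum>l<N. R k l * (degvec m n X l - expect m n th (\<lambda>Y. degvec m n Y l))) k k'
     = (\<Sum>r<N. \<Sum>s<N. R k r * fisherV m n th r s * R k' s)"
proof -
  let ?G = "{..<m}\<times>{..<n}"
  define a where "a k c = (\<Sum>l<N. R k l * iota m n c l)" for k c
  have dv: "degvec m n X l - expect m n th (\<lambda>Y. degvec m n Y l) = (\<Sum>c\<in>?G. iota m n c l * yc m n th c X)"
    if "l < N" for l X
  proof -
    have "expect m n th (\<lambda>Y. degvec m n Y l) = expect m n th (\<lambda>Y. \<Sum>c\<in>?G. iota m n c l * (if Y (fst c) (snd c) then 1 else 0))"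
      using that unfolding N_def by (simp add: degvec_iota)
    also have "\<dots> = (\<Sum>c\<in>?G. iota m n c l * pij m n th (fst c) (snd c))"
      apply (simp add: expect_sum expect_cmult) apply (intro sum.cong refl) by (auto simp: expect_ind)
    finally show ?thesis using that unfolding N_def
      by (simp add: degvec_iota yc_def sum_subtractf[symmetric] algebra_simps)
  qed
  have Y: "(\<Sum>l<N. R k l * (degvec m n X l - expect m n th (\<lambda>Y. degvec m n Y l))) = (\<Sum>c\<in>?G. a k c * yc m n th c X)" for k X
  proof -
    have "(\<Sum>l<N. R k l * (degvec m n X l - expect m n th (\<lambda>Y. degvec m n Y l))) =
       (\<Sum>l<N. \<Sum>c\<in>?G. R k l * iota m n c l * yc m n th c X)"
      by (intro sum.cong refl) (simp add: dv sum_distrib_left ac_simps)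
    also have "\<dots> = (\<Sum>c\<in>?G. a k c * yc m n th c X)"
      by (subst sum.swap) (simp add: a_def sum_distrib_right)
    finally show ?thesis .
  qed
  have EY: "expect m n th (\<lambda>X. \<Sum>c\<in>?G. a k c * yc m n th c X) = 0" for k
    by (simp add: expect_sum expect_cmult expect_yc)
  have EYY: "expect m n th (\<lambda>X. (\<Sum>c\<in>?G. a k c * yc m n th c X) * (\<Sum>c\<in>?G. a k' c * yc m n th c X))
     = (\<Sum>c\<in>?G. uij m n th (fst c) (snd c) * a k c * a k' c)"
  proof -
    have "(\<lambda>X. (\<Sum>c\<in>?G. a k c * yc m n th c X) * (\<Sum>c\<in>?G. a k' c * yc m n th c X)) =
       (\<lambda>X. \<Sum>c\<in>?G. \<Sum>c'\<in>?G. (a k c * a k' c') * (yc m n th c X * yc m n th c' X))"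
      by (simp add: sum_product ac_simps)
    hence "expect m n th (\<lambda>X. (\<Sum>c\<in>?G. a k c * yc m n th c X) * (\<Sum>c\<in>?G. a k' c * yc m n th c X))
      = (\<Sum>c\<in>?G. \<Sum>c'\<in>?G. (a k c * a k' c') * (if c = c' then uij m n th (fst c) (snd c) else 0))"
      by (simp add: expect_sum expect_cmult expect_yc2)
    also have "\<dots> = (\<Sum>c\<in>?G. uij m n th (fst c) (snd c) * a k c * a k' c)"
      by (simp add: if_distrib ac_simps cong: if_cong)
    finally show ?thesis .
  qed
  have "cov_mat m n th (\<lambda>X k. \<Sum>l<N. R k l * (degvec m n X l - expect m n th (\<lambda>Y. degvec m n Y l))) k k'
     = (\<Sum>c\<in>?G. uij m n th (fst c) (snd c) * a k c * a k' c)"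
    unfolding cov_mat_def Y EY EYY by simp
  also have "\<dots> = (\<Sum>r<N. \<Sum>s<N. R k r * fisherV m n th r s * R k' s)"
    unfolding N_def quadform a_def N_def by simp
  finally show ?thesis .
qed



lemma inv_unique_aux:
  fixes M W W' :: "nat \<Rightarrow> nat \<Rightarrow> real"
  assumes W1: "\<forall>i<N. \<forall>j<N. (\<Sum>k<N. M i k * W k j) = (if i = j then 1 else 0)"
    and W2': "\<forall>i<N. \<forall>j<N. (\<Sum>k<N. W' i k * M k j) = (if i = j then 1 else 0)"
    and "i < N" "j < N"
  shows "W' i j = W i j"
proof -
  have "W' i j = (\<Sum>k<N. W' i k * (if k = j then 1 else 0))"
    using assms(4) by (simp add: mult_ind_r)
  also have "\<dots> = (\<Sum>k<N. W' i k * (\<Sum>r<N. M k r * W r j))"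
    using W1 assms(4) by (intro sum.cong refl) simp
  also have "\<dots> = (\<Sum>k<N. \<Sum>r<N. W' i k * M k r * W r j)"
    by (simp add: sum_distrib_left mult.assoc)
  also have "\<dots> = (\<Sum>r<N. \<Sum>k<N. W' i k * M k r * W r j)"
    by (rule sum.swap)
  also have "\<dots> = (\<Sum>r<N. (\<Sum>k<N. W' i k * M k r) * W r j)"
    by (simp add: sum_distrib_right)
  also have "\<dots> = (\<Sum>r<N. (if i = r then 1 else 0) * W r j)"
    using W2' assms(3) by (intro sum.cong refl) simp
  also have "\<dots> = W i j" using assms(3) by (simp add: mult_ind_l)
  finally show ?thesis .
qed

lemma mat_inv_left:
  fixes M :: "nat \<Rightarrow> nat \<Rightarrow> real"
  assumes inj: "\<And>x. (\<forall>r<N. (\<Sum>s<N. M r s * x s) = 0) \<Longrightarrow> (\<forall>s<N. x s = 0)"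
    and "i < N" "j < N"
  shows "(\<Sum>k<N. mat_inv N M i k * M k j) = (if i = j then 1 else 0)"
proof -
  let ?A = "mat N N (\<lambda>(i,j). M i j)"
  have A: "?A \<in> carrier_mat N N" by simp
  have "det ?A \<noteq> 0"
  proof
    assume "det ?A = 0"
    then obtain v where v: "v \<in> carrier_vec N" "v \<noteq> 0\<^sub>v N" "?A *\<^sub>v v = 0\<^sub>v N"
      using det_0_iff_vec_prod_zero[OF A] by auto
    have "\<forall>r<N. (\<Sum>s<N. M r s * (v $ s)) = 0"
    proof (intro allI impI)
      fix r assume r: "r < N"
      have "(?A *\<^sub>v v) $ r = 0" using v(3) r by simp
      then show "(\<Sum>s<N. M r s * (v $ s)) = 0"
        using r v(1) by (simp add: scalar_prod_def atLeast0LessThan)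
    qed
    from inj[OF this] have "v = 0\<^sub>v N" using v(1) by (intro eq_vecI) auto
    with v(2) show False by simp
  qed
  from det_non_zero_imp_unit[OF A this, of "()"]
  have "\<exists>B. B \<in> carrier_mat N N \<and> B * ?A = 1\<^sub>m N \<and> ?A * B = 1\<^sub>m N"
    unfolding Units_def ring_mat_def by (simp add: Bex_def)
  then obtain B where B: "B \<in> carrier_mat N N" "B * ?A = 1\<^sub>m N" "?A * B = 1\<^sub>m N" by blast
  define W where "W i j = (if i < N \<and> j < N then B $$ (i,j) else 0)" for i j
  have P1: "\<forall>i<N. \<forall>j<N. (\<Sum>k<N. M i k * W k j) = (if i = j then 1 else 0)"
  proof (intro allI impI)
    fix i j assume ij: "i < N" "j < N"
    have "(?A * B) $$ (i,j) = (if i = j then 1 else 0)" using B(3) ij by simp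
    then show "(\<Sum>k<N. M i k * W k j) = (if i = j then 1 else 0)"
      using ij B(1) by (simp add: scalar_prod_def atLeast0LessThan W_def)
  qed
  have P2: "\<forall>i<N. \<forall>j<N. (\<Sum>k<N. W i k * M k j) = (if i = j then 1 else 0)"
  proof (intro allI impI)
    fix i j assume ij: "i < N" "j < N"
    have "(B * ?A) $$ (i,j) = (if i = j then 1 else 0)" using B(2) ij by simp
    then show "(\<Sum>k<N. W i k * M k j) = (if i = j then 1 else 0)"
      using ij B(1) by (simp add: scalar_prod_def atLeast0LessThan W_def)
  qed
  have P3: "\<forall>i j. \<not> (i < N \<and> j < N) \<longrightarrow> W i j = 0" by (simp add: W_def)
  have "mat_inv N M = W"
    unfolding mat_inv_def
  proof (rule the_equality)
    show "(\<forall>i<N. \<forall>j<N. (\<Sum>k<N. M i k * W k j) = (if i = j then 1 else 0)) \<and>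
     (\<forall>i<N. \<forall>j<N. (\<Sum>k<N. W i k * M k j) = (if i = j then 1 else 0)) \<and>
     (\<forall>i j. \<not> (i < N \<and> j < N) \<longrightarrow> W i j = 0)" using P1 P2 P3 by blast
    fix W' assume H: "(\<forall>i<N. \<forall>j<N. (\<Sum>k<N. M i k * W' k j) = (if i = j then 1 else 0)) \<and>
     (\<forall>i<N. \<forall>j<N. (\<Sum>k<N. W' i k * M k j) = (if i = j then 1 else 0)) \<and>
     (\<forall>i j. \<not> (i < N \<and> j < N) \<longrightarrow> W' i j = 0)"
    show "W' = W"
    proof (intro ext)
      fix i j show "W' i j = W i j"
      proof (cases "i < N \<and> j < N")
        case True
        then show ?thesis using inv_unique_aux[OF P1, of W' i j] H by simp
      next
        case False
        then show ?thesis using H P3 by simp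
      qed
    qed
  qed
  then show ?thesis using P2 assms by simp
qed



lemma uij_pos: "uij m n th i j > 0"
proof -
  have "1 + exp (alpha th i + beta m n th j) > 0" by (simp add: add_pos_pos)
  then show ?thesis unfolding uij_def by simp
qed

lemma sum_if_const: "(\<Sum>x\<in>A. if P then f x else 0) = (if P then sum f A else 0)"
  by simp

lemma iota_sum:
  assumes "i < m" "j < n"
  shows "(\<Sum>r<m+n-1. x r * iota m n (i,j) r) = x i + (if j < n - 1 then x (m + j) else 0)"
proof -
  have "(\<Sum>r<m+n-1. x r * iota m n (i,j) r) = (\<Sum>r<m+n-1. (if r = i then x r else 0) + (if j < n - 1 \<and> r = m + j then x r else 0))"
    by (intro sum.cong refl) (simp add: iota_def distrib_left)
  also have "\<dots> = (\<Sum>r<m+n-1. if r = i then x r else 0) + (\<Sum>r<m+n-1. if j < n - 1 \<and> r = m + j then x r else 0)"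
    by (rule sum.distrib)
  also have "\<dots> = x i + (if j < n - 1 then x (m + j) else 0)"
  proof -
    have "i < m + n - 1" using assms by arith
    moreover have "j < n - 1 \<Longrightarrow> m + j < m + n - 1" by arith
    ultimately show ?thesis by (auto simp: sum.delta' cong: conj_cong)
  qed
  finally show ?thesis .
qed

lemma V_inj:
  assumes m: "1 \<le> m" and n: "1 \<le> n"
    and H: "\<forall>r<m+n-1. (\<Sum>s<m+n-1. fisherV m n th r s * x s) = 0"
  shows "\<forall>s<m+n-1. x s = 0"
proof -
  let ?G = "{..<m}\<times>{..<n}"
  define z where "z c = (\<Sum>r<m+n-1. x r * iota m n c r)" for c
  have "(\<Sum>r<m+n-1. \<Sum>s<m+n-1. x r * fisherV m n th r s * x s) = (\<Sum>r<m+n-1. x r * (\<Sum>s<m+n-1. fisherV m n th r s * x s))"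
    by (simp add: sum_distrib_left mult.assoc)
  also have "\<dots> = 0" using H by simp
  finally have "(\<Sum>c\<in>?G. uij m n th (fst c) (snd c) * z c * z c) = 0"
    unfolding quadform z_def by simp
  moreover have "\<forall>c\<in>?G. 0 \<le> uij m n th (fst c) (snd c) * z c * z c"
    using uij_pos by (simp add: mult.assoc less_imp_le)
  ultimately have Z0: "\<forall>c\<in>?G. uij m n th (fst c) (snd c) * z c * z c = 0"
    using sum_nonneg_eq_0_iff[of ?G "\<lambda>c. uij m n th (fst c) (snd c) * z c * z c"] by blast
  have Z: "\<forall>c\<in>?G. z c = 0"
  proof
    fix c assume "c \<in> ?G"
    with Z0 have "uij m n th (fst c) (snd c) * z c * z c = 0" by blast
    hence "uij m n th (fst c) (snd c) * (z c * z c) = 0" by (simp only: mult.assoc)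
    moreover have "uij m n th (fst c) (snd c) \<noteq> 0" using uij_pos[of m n th "fst c" "snd c"] by linarith
    ultimately show "z c = 0" by simp
  qed
  have xi: "x i = 0" if "i < m" for i
  proof -
    have "z (i, n-1) = 0" using Z that n by auto
    then show ?thesis unfolding z_def using that n by (subst (asm) iota_sum) auto
  qed
  show ?thesis
  proof (intro allI impI)
    fix s assume s: "s < m + n - 1"
    show "x s = 0"
    proof (cases "s < m")
      case True then show ?thesis by (rule xi)
    next
      case False
      have j: "s - m < n - 1" "s - m < n" using False s by arith+
      have "z (0, s - m) = 0" using Z m j by auto
      then have "x 0 + x (m + (s - m)) = 0" unfolding z_def using m j by (subst (asm) iota_sum) auto
      then show ?thesis using xi[of 0] m False by simp
    qed
  qed
qed

lemma W_left:
  assumes "1 \<le> m" "1 \<le> n" "i < m+n-1" "j < m+n-1"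
  shows "(\<Sum>k<m+n-1. mat_inv (m+n-1) (fisherV m n th) i k * fisherV m n th k j) = (if i = j then 1 else 0)"
  by (rule mat_inv_left) (use V_inj[OF assms(1,2)] assms in auto)

lemma fisherV_sym: "r < m+n-1 \<Longrightarrow> s < m+n-1 \<Longrightarrow> fisherV m n th r s = fisherV m n th s r"
  by (simp add: fisherV_iota ac_simps)

lemma algebra_step:
  fixes W V S :: "nat \<Rightarrow> nat \<Rightarrow> real"
  assumes WV: "\<And>i j. i < N \<Longrightarrow> j < N \<Longrightarrow> (\<Sum>k<N. W i k * V k j) = (if i = j then 1 else 0)"
    and sym: "\<And>r s. r < N \<Longrightarrow> s < N \<Longrightarrow> V r s = V s r"
    and kl: "k < N" "l < N"
  shows "(\<Sum>r<N. \<Sum>s<N. (W k r - S k r) * V r s * (W l s - S l s)) =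
         (W l k - S l k) - S k l + (\<Sum>r<N. \<Sum>s<N. S k r * V r s * S l s)"
proof -
  define SV where "SV s = (\<Sum>r<N. S k r * V r s)" for s
  have "(\<Sum>r<N. \<Sum>s<N. (W k r - S k r) * V r s * (W l s - S l s)) =
        (\<Sum>s<N. \<Sum>r<N. (W k r * V r s - S k r * V r s) * (W l s - S l s))"
    by (subst sum.swap) (simp add: algebra_simps)
  also have "\<dots> = (\<Sum>s<N. ((\<Sum>r<N. W k r * V r s) - SV s) * (W l s - S l s))"
    unfolding SV_def by (intro sum.cong refl) (simp add: left_diff_distrib sum_subtractf sum_distrib_right)
  also have "\<dots> = (\<Sum>s<N. ((if k = s then 1 else 0) - SV s) * (W l s - S l s))"
    using WV kl by simp
  also have "\<dots> = (\<Sum>s<N. (if k = s then W l s - S l s else 0)) - (\<Sum>s<N. SV s * W l s) + (\<Sum>s<N. SV s * S l s)"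
    using kl by (simp add: algebra_simps sum.distrib sum_subtractf mult_ind_r mult_ind_l)
  also have "(\<Sum>s<N. (if k = s then W l s - S l s else 0)) = W l k - S l k"
    using kl by simp
  also have "(\<Sum>s<N. SV s * W l s) = S k l"
  proof -
    have "(\<Sum>s<N. SV s * W l s) = (\<Sum>s<N. \<Sum>r<N. S k r * V r s * W l s)"
      by (simp add: SV_def sum_distrib_right)
    also have "\<dots> = (\<Sum>s<N. \<Sum>r<N. S k r * (W l s * V s r))"
      by (intro sum.cong refl) (simp add: sym)
    also have "\<dots> = (\<Sum>r<N. S k r * (\<Sum>s<N. W l s * V s r))"
      by (subst sum.swap) (simp add: sum_distrib_left)
    also have "\<dots> = (\<Sum>r<N. S k r * (if l = r then 1 else 0))"
      using WV kl by simp
    also have "\<dots> = S k l" using kl by (simp add: mult_ind_r)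
    finally show ?thesis .
  qed
  also have "(\<Sum>s<N. SV s * S l s) = (\<Sum>r<N. \<Sum>s<N. S k r * V r s * S l s)"
    by (simp add: SV_def sum_distrib_right) (rule sum.swap)
  finally show ?thesis by simp
qed



definition sig :: "nat \<Rightarrow> nat \<Rightarrow> (nat \<Rightarrow> real) \<Rightarrow> real \<Rightarrow> nat \<Rightarrow> nat \<Rightarrow> nat \<Rightarrow> real" where
  "sig m n d vl k i j = (if k < m then (if k = i then 1 / d k else 0) + (if j = n - 1 then 1 / vl else 0)
      else (if j < n - 1 \<and> k = m + j then 1 / d k else 0) - (if j = n - 1 then 1 / vl else 0))"

lemma caseA:
  fixes u :: "nat \<Rightarrow> nat \<Rightarrow> real" and d :: "nat \<Rightarrow> real"
  assumes n: "n = Suc n'" and k: "k < m" and l: "l < m"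
    and dpos: "\<And>i. i < m \<Longrightarrow> d i > 0" and d: "\<And>i. i < m \<Longrightarrow> d i = (\<Sum>j<n. u i j)"
    and vl: "vl = (\<Sum>i<m. u i n')" and vlpos: "vl > 0"
  shows "(\<Sum>i<m. \<Sum>j<n. u i j * sig m n d vl k i j * sig m n d vl l i j)
     = (if k = l then 1 / d k else 0) + 1 / vl + u k n' / (d k * vl) + u l n' / (d l * vl)"
proof -
  define A where "A i = (if k = i then 1 / d k else 0)" for i
  define B where "B i = (if l = i then 1 / d l else 0)" for i
  have inner: "(\<Sum>j<n. u i j * sig m n d vl k i j * sig m n d vl l i j)
     = (if k = i \<and> l = i then 1 / d i else 0) + u i n' * A i / vl + u i n' * B i / vl + u i n' / vl^2"
    if i: "i < m" for i
  proof -
    have "(\<Sum>j<n. u i j * sig m n d vl k i j * sig m n d vl l i j)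
       = (\<Sum>j<n'. u i j * A i * B i) + u i n' * (A i + 1/vl) * (B i + 1/vl)"
      unfolding n sum.lessThan_Suc using k l
      by (simp add: sig_def A_def B_def)
    also have "(\<Sum>j<n'. u i j * A i * B i) = (d i - u i n') * A i * B i"
      using d[OF i] unfolding n by (simp add: sum_distrib_right)
    finally have e: "(\<Sum>j<n. u i j * sig m n d vl k i j * sig m n d vl l i j) =
        (d i - u i n') * A i * B i + u i n' * (A i + 1/vl) * (B i + 1/vl)" .
    have "(d i - u i n') * A i * B i + u i n' * (A i + 1/vl) * (B i + 1/vl)
        = d i * A i * B i + u i n' * A i / vl + u i n' * B i / vl + u i n' / vl^2"
      using vlpos by (simp add: field_simps power2_eq_square)
    also have "d i * A i * B i = (if k = i \<and> l = i then 1 / d i else 0)"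
      using dpos[OF i] by (auto simp: A_def B_def)
    finally show ?thesis using e by simp
  qed
  have "(\<Sum>i<m. \<Sum>j<n. u i j * sig m n d vl k i j * sig m n d vl l i j)
     = (\<Sum>i<m. (if k = i \<and> l = i then 1 / d i else 0) + u i n' * A i / vl + u i n' * B i / vl + u i n' / vl^2)"
    using inner by simp
  also have "\<dots> = (\<Sum>i<m. (if k = i \<and> l = i then 1 / d i else 0)) + (\<Sum>i<m. u i n' * A i / vl)
      + (\<Sum>i<m. u i n' * B i / vl) + (\<Sum>i<m. u i n' / vl^2)"
    by (simp add: sum.distrib)
  also have "(\<Sum>i<m. (if k = i \<and> l = i then 1 / d i else 0)) = (if k = l then 1 / d k else 0)"
  proof -
    have e: "(\<lambda>i. if k = i \<and> l = i then 1 / d i else 0) = (\<lambda>i. if k = i then (if k = l then 1 / d k else 0) else 0)"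
      by auto
    show ?thesis using k by (simp only: e) (simp add: sum.delta)
  qed
  also have "(\<Sum>i<m. u i n' * A i / vl) = u k n' / (d k * vl)"
  proof -
    have e: "(\<lambda>i. u i n' * A i / vl) = (\<lambda>i. if k = i then u k n' / (d k * vl) else 0)"
      by (auto simp: A_def fun_eq_iff)
    show ?thesis using k by (simp only: e) (simp add: sum.delta)
  qed
  also have "(\<Sum>i<m. u i n' * B i / vl) = u l n' / (d l * vl)"
  proof -
    have e: "(\<lambda>i. u i n' * B i / vl) = (\<lambda>i. if l = i then u l n' / (d l * vl) else 0)"
      by (auto simp: B_def fun_eq_iff)
    show ?thesis using l by (simp only: e) (simp add: sum.delta)
  qed
  also have "(\<Sum>i<m. u i n' / vl^2) = 1 / vl"
    using vlpos by (simp add: vl sum_divide_distrib[symmetric] power2_eq_square)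
  finally show ?thesis by simp
qed

lemma caseB:
  fixes u :: "nat \<Rightarrow> nat \<Rightarrow> real" and d :: "nat \<Rightarrow> real"
  assumes n: "n = Suc n'" and k: "k < m" and l: "l = m + jb" and jb: "jb < n'"
    and vl: "vl = (\<Sum>i<m. u i n')" and vlpos: "vl > 0"
  shows "(\<Sum>i<m. \<Sum>j<n. u i j * sig m n d vl k i j * sig m n d vl l i j)
     = u k jb / (d k * d l) - u k n' / (d k * vl) - 1 / vl"
proof -
  define A where "A i = (if k = i then 1 / d k else 0)" for i
  have inner: "(\<Sum>j<n. u i j * sig m n d vl k i j * sig m n d vl l i j)
     = u i jb * A i / d l - u i n' * A i / vl - u i n' / vl^2" for i
  proof -
    have "(\<Sum>j<n. u i j * sig m n d vl k i j * sig m n d vl l i j)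
       = (\<Sum>j<n'. if j = jb then u i j * A i / d l else 0) + u i n' * (A i + 1/vl) * (0 - 1/vl)"
      unfolding n sum.lessThan_Suc using k l jb
      by (intro arg_cong2[where f="(+)"] sum.cong refl) (auto simp: sig_def A_def)
    also have "(\<Sum>j<n'. if j = jb then u i j * A i / d l else 0) = u i jb * A i / d l"
      using jb by (simp add: sum.delta')
    also have "u i n' * (A i + 1/vl) * (0 - 1/vl) = - (u i n' * A i / vl) - u i n' / vl^2"
      using vlpos by (simp add: field_simps power2_eq_square)
    finally show ?thesis by simp
  qed
  have "(\<Sum>i<m. \<Sum>j<n. u i j * sig m n d vl k i j * sig m n d vl l i j)
     = (\<Sum>i<m. u i jb * A i / d l) - (\<Sum>i<m. u i n' * A i / vl) - (\<Sum>i<m. u i n' / vl^2)"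
    using inner by (simp add: sum_subtractf)
  also have "(\<Sum>i<m. u i jb * A i / d l) = u k jb / (d k * d l)"
  proof -
    have e: "(\<lambda>i. u i jb * A i / d l) = (\<lambda>i. if k = i then u k jb / (d k * d l) else 0)"
      by (auto simp: A_def fun_eq_iff)
    show ?thesis using k by (simp only: e) (simp add: sum.delta)
  qed
  also have "(\<Sum>i<m. u i n' * A i / vl) = u k n' / (d k * vl)"
  proof -
    have e: "(\<lambda>i. u i n' * A i / vl) = (\<lambda>i. if k = i then u k n' / (d k * vl) else 0)"
      by (auto simp: A_def fun_eq_iff)
    show ?thesis using k by (simp only: e) (simp add: sum.delta)
  qed
  also have "(\<Sum>i<m. u i n' / vl^2) = 1 / vl"
    using vlpos by (simp add: vl sum_divide_distrib[symmetric] power2_eq_square)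
  finally show ?thesis by simp
qed

lemma caseC:
  fixes u :: "nat \<Rightarrow> nat \<Rightarrow> real" and d :: "nat \<Rightarrow> real"
  assumes n: "n = Suc n'" and k: "k = m + ja" and l: "l = m + jb" and ja: "ja < n'" and jb: "jb < n'"
    and dk: "d k = (\<Sum>i<m. u i ja)" and dkpos: "d k > 0"
    and vl: "vl = (\<Sum>i<m. u i n')" and vlpos: "vl > 0"
  shows "(\<Sum>i<m. \<Sum>j<n. u i j * sig m n d vl k i j * sig m n d vl l i j)
     = (if k = l then 1 / d k else 0) + 1 / vl"
proof -
  have inner: "(\<Sum>j<n. u i j * sig m n d vl k i j * sig m n d vl l i j)
     = (if ja = jb then u i ja / (d k * d k) else 0) + u i n' / vl^2" for i
  proof -
    have "(\<Sum>j<n. u i j * sig m n d vl k i j * sig m n d vl l i j)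
       = (\<Sum>j<n'. if j = ja then (if ja = jb then u i j / (d k * d k) else 0) else 0) + u i n' * (0 - 1/vl) * (0 - 1/vl)"
      unfolding n sum.lessThan_Suc using k l ja jb
      by (intro arg_cong2[where f="(+)"] sum.cong refl) (auto simp: sig_def)
    also have "(\<Sum>j<n'. if j = ja then (if ja = jb then u i j / (d k * d k) else 0) else 0)
        = (if ja = jb then u i ja / (d k * d k) else 0)"
      using ja by (simp add: sum.delta')
    finally show ?thesis by (simp add: power2_eq_square)
  qed
  have "(\<Sum>i<m. \<Sum>j<n. u i j * sig m n d vl k i j * sig m n d vl l i j)
     = (\<Sum>i<m. (if ja = jb then u i ja / (d k * d k) else 0)) + (\<Sum>i<m. u i n' / vl^2)"
    using inner by (simp add: sum.distrib)
  also have "(\<Sum>i<m. (if ja = jb then u i ja / (d k * d k) else 0)) = (if k = l then 1 / d k else 0)"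
  proof (cases "ja = jb")
    case True
    then have "k = l" using k l by simp
    have "(\<Sum>i<m. (if ja = jb then u i ja / (d k * d k) else 0)) = (\<Sum>i<m. u i ja) / (d k * d k)"
      using True by (simp add: sum_divide_distrib)
    also have "\<dots> = 1 / d k" using dkpos by (simp add: dk[symmetric])
    finally show ?thesis using \<open>k = l\<close> by simp
  next
    case False
    then have "k \<noteq> l" using k l by simp
    then show ?thesis using False by simp
  qed
  also have "(\<Sum>i<m. u i n' / vl^2) = 1 / vl"
    using vlpos by (simp add: vl sum_divide_distrib[symmetric] power2_eq_square)
  finally show ?thesis by simp
qed



lemma uij_le: "uij m n th i j \<le> 1/4"
proof -
  define e where "e = exp (alpha th i + beta m n th j)"
  have e: "e > 0" by (simp add: e_def)
  have "4 * e \<le> (1 + e)^2" using sum_squares_ge_zero[of "1 - e" 0]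
    by (simp add: power2_eq_square algebra_simps)
  then show ?thesis unfolding uij_def e_def[symmetric] using e
    by (simp add: field_simps)
qed

lemma cosh_mono:
  fixes a y :: real
  assumes "0 \<le> a" "a \<le> y"
  shows "exp a + exp (-a) \<le> exp y + exp (-y)"
proof -
  have "(exp y - exp a) * (1 - exp (-a-y)) \<ge> 0"
    using assms by (intro mult_nonneg_nonneg) auto
  moreover have "(exp y - exp a) * (1 - exp (-a-y)) = exp y + exp (-y) - exp a - exp (-a)"
    by (simp add: algebra_simps exp_add[symmetric] exp_diff[symmetric])
  ultimately show ?thesis by simp
qed

lemma ulower:
  fixes x y :: real
  assumes "\<bar>x\<bar> \<le> y"
  shows "exp y / (1 + exp y)^2 \<le> exp x / (1 + exp x)^2"
proof -
  have f: "exp z / (1 + exp z)^2 = 1 / (exp z + exp (-z) + 2)" for z :: real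
  proof -
    have "(1 + exp z)^2 = exp z * (exp z + exp (-z) + 2)"
      by (simp add: power2_eq_square algebra_simps exp_minus)
    moreover have "\<And>a K. (a::real) \<noteq> 0 \<Longrightarrow> a / (a * K) = 1 / K" by simp
    ultimately show ?thesis by simp
  qed
  have "exp x + exp (-x) = exp \<bar>x\<bar> + exp (-\<bar>x\<bar>)" by (cases "x \<ge> 0") auto
  also have "\<dots> \<le> exp y + exp (-y)" using cosh_mono[of "\<bar>x\<bar>" y] assms by simp
  finally have le: "exp x + exp (-x) + 2 \<le> exp y + exp (-y) + 2" by simp
  have "0 < exp x + exp (-x) + 2" by (simp add: add_pos_pos)
  then show ?thesis unfolding f using le by (intro divide_left_mono mult_pos_pos) auto
qed

lemma sup_norm_ge:
  assumes "i < N" shows "\<bar>x i\<bar> \<le> sup_norm N x"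
  unfolding sup_norm_def using assms by (intro Max_ge) auto

lemma uij_lower:
  assumes m: "1 \<le> m" and "i < m" "j < n"
  shows "exp (2 * sup_norm (m+n-1) th) / (1 + exp (2 * sup_norm (m+n-1) th))^2 \<le> uij m n th i j"
proof -
  let ?M = "sup_norm (m+n-1) th"
  have a: "\<bar>alpha th i\<bar> \<le> ?M" unfolding alpha_def using assms by (intro sup_norm_ge) arith
  have M0: "0 \<le> ?M" using sup_norm_ge[of 0 "m+n-1" th] assms by arith
  have b: "\<bar>beta m n th j\<bar> \<le> ?M"
  proof (cases "j < n - 1")
    case True then show ?thesis unfolding beta_def by simp (intro sup_norm_ge, arith)
  next
    case False then show ?thesis unfolding beta_def using M0 by simp
  qed
  have "\<bar>alpha th i + beta m n th j\<bar> \<le> 2 * ?M" using a b by arith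
  from ulower[OF this] show ?thesis unfolding uij_def .
qed

lemma frac_bound:
  fixes u x y p q :: real
  assumes "0 \<le> u" "u \<le> 1/4" "p > 0" "q > 0" "p \<le> x" "q \<le> y"
  shows "0 \<le> u / (x * y)" "u / (x * y) \<le> 1 / (4 * (p * q))"
proof -
  have xy: "p * q \<le> x * y" using assms by (intro mult_mono) auto
  have pq: "p * q > 0" using assms by simp
  show "0 \<le> u / (x * y)" using assms xy pq by simp
  have "u / (x * y) \<le> (1/4) / (x * y)" using assms xy pq by (intro divide_right_mono) auto
  also have "\<dots> \<le> (1/4) / (p * q)" using xy pq by (intro divide_left_mono) auto
  finally show "u / (x * y) \<le> 1 / (4 * (p * q))" by simp
qed



lemma sigma_eq:
  assumes "1 \<le> m" "1 \<le> n" "k < m+n-1" "i < m" "j < n"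
  shows "(\<Sum>r<m+n-1. approxS m n th k r * iota m n (i,j) r) = sig m n (\<lambda>k. fisherV m n th k k) (vlast m n th) k i j"
proof -
  have "(\<Sum>r<m+n-1. approxS m n th k r * iota m n (i,j) r) =
     approxS m n th k i + (if j < n - 1 then approxS m n th k (m + j) else 0)"
    by (rule iota_sum) (use assms in auto)
  also have "\<dots> = sig m n (\<lambda>k. fisherV m n th k k) (vlast m n th) k i j"
  proof -
    have "i < m + n - 1" using assms by arith
    moreover have "j < n - 1 \<Longrightarrow> m + j < m + n - 1" by arith
    moreover have "\<not> j < n - 1 \<Longrightarrow> j = n - 1" using assms by arith
    ultimately show ?thesis using assms by (auto simp: approxS_def sig_def)
  qed
  finally show ?thesis .
qed

lemma Q_eq:
  assumes "1 \<le> m" "1 \<le> n" "k < m+n-1" "l < m+n-1"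
  shows "(\<Sum>r<m+n-1. \<Sum>s<m+n-1. approxS m n th k r * fisherV m n th r s * approxS m n th l s) =
    (\<Sum>i<m. \<Sum>j<n. uij m n th i j * sig m n (\<lambda>k. fisherV m n th k k) (vlast m n th) k i j
        * sig m n (\<lambda>k. fisherV m n th k k) (vlast m n th) l i j)"
  unfolding quadform unfolding sum.cartesian_product
proof (intro sum.cong refl)
  fix c assume c: "c \<in> {..<m}\<times>{..<n}"
  obtain a b where ab: "c = (a,b)" by (cases c)
  have e1: "(\<Sum>r<m+n-1. approxS m n th k r * iota m n (a,b) r) = sig m n (\<lambda>k. fisherV m n th k k) (vlast m n th) k a b"
    using c ab assms by (intro sigma_eq) auto
  have e2: "(\<Sum>r<m+n-1. approxS m n th l r * iota m n (a,b) r) = sig m n (\<lambda>k. fisherV m n th k k) (vlast m n th) l a b"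
    using c ab assms by (intro sigma_eq) auto
  show "uij m n th (fst c) (snd c) * (\<Sum>r<m + n - 1. approxS m n th k r * iota m n c r) *
         (\<Sum>s<m + n - 1. approxS m n th l s * iota m n c s) =
        (case c of (i, j) \<Rightarrow> uij m n th i j * sig m n (\<lambda>k. fisherV m n th k k) (vlast m n th) k i j *
           sig m n (\<lambda>k. fisherV m n th k k) (vlast m n th) l i j)"
    unfolding ab by (simp only: e1 e2 fst_conv snd_conv prod.case)
qed



lemma D_bound:
  fixes m n :: nat and th :: "nat \<Rightarrow> real" and b :: real
  assumes m: "1 \<le> m" and mn: "m \<le> n" and k: "k < m+n-1" and l: "l < m+n-1"
    and b: "b > 0" and ub: "\<And>i j. i < m \<Longrightarrow> j < n \<Longrightarrow> b \<le> uij m n th i j"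
  defines "Q \<equiv> (\<lambda>k l. \<Sum>i<m. \<Sum>j<n. uij m n th i j * sig m n (\<lambda>k. fisherV m n th k k) (vlast m n th) k i j
        * sig m n (\<lambda>k. fisherV m n th k k) (vlast m n th) l i j)"
  shows "\<bar>Q k l - approxS m n th k l\<bar> \<le> 2 * (1 / (4 * (real n * b * (real m * b))))"
proof -
  define Bd where "Bd = 1 / (4 * (real n * b * (real m * b)))"
  obtain n' where n: "n = Suc n'" using m mn by (cases n) auto
  define d where "d = (\<lambda>k. fisherV m n th k k)"
  define vl where "vl = vlast m n th"
  define u where "u = uij m n th"
  have Qd: "Q = (\<lambda>k l. \<Sum>i<m. \<Sum>j<n. u i j * sig m n d vl k i j * sig m n d vl l i j)"
    unfolding Q_def d_def vl_def u_def ..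
  have dA: "d i = (\<Sum>j<n. u i j)" if "i < m" for i
    using that unfolding d_def u_def fisherV_def by simp
  have dC: "d (m + j) = (\<Sum>i<m. u i j)" if "j < n'" for j
    using that n unfolding d_def u_def fisherV_def by simp
  have vlE: "vl = (\<Sum>i<m. u i n')" unfolding vl_def vlast_def u_def n by simp
  have u0: "0 \<le> u i j" for i j unfolding u_def using uij_pos[of m n th i j] by simp
  have u4: "u i j \<le> 1/4" for i j unfolding u_def by (rule uij_le)
  have ubd: "b \<le> u i j" if "i < m" "j < n" for i j unfolding u_def using ub that .
  have dAlow: "real n * b \<le> d i" if "i < m" for i
  proof -
    have "(\<Sum>j<n. b) \<le> (\<Sum>j<n. u i j)" using ubd that by (intro sum_mono) auto
    then show ?thesis using dA[OF that] by simp
  qed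
  have dClow: "real m * b \<le> d (m + j)" if "j < n'" for j
  proof -
    have "(\<Sum>i<m. b) \<le> (\<Sum>i<m. u i j)" using ubd that n by (intro sum_mono) auto
    then show ?thesis using dC[OF that] by simp
  qed
  have vllow: "real m * b \<le> vl"
  proof -
    have "(\<Sum>i<m. b) \<le> (\<Sum>i<m. u i n')" using ubd n by (intro sum_mono) auto
    then show ?thesis using vlE by simp
  qed
  have nb: "real n * b > 0" "real m * b > 0" using b m n by auto
  have dApos: "d i > 0" if "i < m" for i using dAlow[OF that] nb by linarith
  have dCpos: "d (m + j) > 0" if "j < n'" for j using dClow[OF that] nb by linarith
  have vlpos: "vl > 0" using vllow nb by linarith
  have T1: "0 \<le> u i j / (x * y) \<and> u i j / (x * y) \<le> Bd" if "real n * b \<le> x" "real m * b \<le> y" for i j x y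
    using frac_bound[OF u0 u4 nb(1) nb(2) that] unfolding Bd_def by simp
  have T2: "0 \<le> u i j / (x * y) \<and> u i j / (x * y) \<le> Bd" if "real m * b \<le> x" "real n * b \<le> y" for i j x y
    using T1[OF that(2,1), of i j] by (simp add: mult.commute)
  have S_def': "approxS m n th k l = (if (k < m \<and> l < m) \<or> (m \<le> k \<and> m \<le> l)
         then (if k = l then 1 / d k else 0) + 1 / vl else - 1 / vl)" if "k < m+n-1" "l < m+n-1" for k l
    using that unfolding approxS_def d_def vl_def by simp
  have Bcase: "\<bar>Q k l - approxS m n th k l\<bar> \<le> Bd" if k: "k < m" and l: "\<not> l < m" "l < m+n-1" for k l
  proof -
    have j2: "l - m < n'" "l = m + (l - m)" using l n by arith+
    have "Q k l = u k (l-m) / (d k * d l) - u k n' / (d k * vl) - 1 / vl"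
      unfolding Qd by (rule caseB[where n=n and n'=n' and k=k and m=m and l=l and jb="l-m" and vl=vl and u=u and d=d, OF n k j2(2) j2(1) vlE vlpos])
    moreover have "approxS m n th k l = - 1 / vl" using S_def' k l by simp
    moreover have "0 \<le> u k (l-m) / (d k * d l) \<and> u k (l-m) / (d k * d l) \<le> Bd"
      using T1 dAlow[OF k] dClow[OF j2(1)] j2(2) by metis
    moreover have "0 \<le> u k n' / (d k * vl) \<and> u k n' / (d k * vl) \<le> Bd"
      using T1 dAlow[OF k] vllow by metis
    ultimately show ?thesis by (simp add: abs_le_iff)
  qed
  have "\<bar>Q k l - approxS m n th k l\<bar> \<le> 2 * Bd"
  proof (cases "k < m")
    case kk: True
    show ?thesis
    proof (cases "l < m")
      case ll: True
      have "Q k l = (if k = l then 1 / d k else 0) + 1 / vl + u k n' / (d k * vl) + u l n' / (d l * vl)"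
        unfolding Qd by (rule caseA[where n=n and n'=n' and k=k and m=m and l=l and vl=vl and u=u and d=d, OF n kk ll dApos dA vlE vlpos])
      moreover have "approxS m n th k l = (if k = l then 1 / d k else 0) + 1 / vl" using S_def' k l kk ll by simp
      moreover have "0 \<le> u k n' / (d k * vl) \<and> u k n' / (d k * vl) \<le> Bd"
        using T1 dAlow[OF kk] vllow by metis
      moreover have "0 \<le> u l n' / (d l * vl) \<and> u l n' / (d l * vl) \<le> Bd"
        using T1 dAlow[OF ll] vllow by metis
      ultimately show ?thesis by (simp add: abs_le_iff)
    next
      case ll: False
      have "Bd \<ge> 0" unfolding Bd_def using nb by simp
      then show ?thesis using Bcase[OF kk ll l] by simp
    qed
  next
    case kk: False
    show ?thesis
    proof (cases "l < m")
      case ll: True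
      have "Q k l = Q l k" unfolding Qd by (intro sum.cong refl) (simp add: ac_simps)
      moreover have "approxS m n th k l = approxS m n th l k" using S_def' k l kk ll by simp
      moreover have "Bd \<ge> 0" unfolding Bd_def using nb by simp
      ultimately show ?thesis using Bcase[OF ll kk k] by simp
    next
      case ll: False
      have j: "k - m < n'" "k = m + (k - m)" "l - m < n'" "l = m + (l - m)" using k l kk ll n by arith+
      have "Q k l = (if k = l then 1 / d k else 0) + 1 / vl"
        unfolding Qd
        by (rule caseC[where n=n and n'=n' and k=k and m=m and l=l and ja="k-m" and jb="l-m" and vl=vl and u=u and d=d, OF n j(2) j(4) j(1) j(3) _ _ vlE vlpos]) (use dC[OF j(1)] dCpos[OF j(1)] j(2) in auto)
      moreover have "approxS m n th k l = (if k = l then 1 / d k else 0) + 1 / vl" using S_def' k l kk ll by simp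
      moreover have "Bd \<ge> 0" unfolding Bd_def using nb by simp
      ultimately show ?thesis by simp
    qed
  qed
  then show ?thesis unfolding Bd_def .
qed



theorem lemma6:
  fixes m n :: nat and theta :: "nat \<Rightarrow> real"
  assumes "1 \<le> m" and "m \<le> n"
  defines "N \<equiv> m + n - 1"
  defines "R \<equiv> (\<lambda>k l. mat_inv N (fisherV m n theta) k l - approxS m n theta k l)"
  defines "U \<equiv> cov_mat m n theta
     (\<lambda>X k. \<Sum>l<N. R k l * (degvec m n X l - expect m n theta (\<lambda>Y. degvec m n Y l)))"
  shows "max_norm N U \<le> max_norm N R
     + 3 * (1 + exp (2 * sup_norm N theta))^4 / (4 * m * n * exp (4 * sup_norm N theta))"
proof -
  let ?M = "sup_norm N theta"
  define E where "E = exp (2 * ?M)"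
  define b where "b = E / (1 + E)^2"
  define Bd where "Bd = 1 / (4 * (real n * b * (real m * b)))"
  have E: "E > 0" unfolding E_def by simp
  have b: "b > 0" unfolding b_def using E by simp
  have n1: "1 \<le> n" using assms by simp
  have N1: "0 < N" unfolding N_def using assms by simp
  have ub: "\<And>i j. i < m \<Longrightarrow> j < n \<Longrightarrow> b \<le> uij m n theta i j"
    unfolding b_def E_def N_def using uij_lower[OF assms(1)] by blast
  have Bd0: "0 \<le> Bd" unfolding Bd_def using b by simp
  have BdE: "3 * Bd = 3 * (1 + exp (2 * ?M))^4 / (4 * m * n * exp (4 * ?M))"
  proof -
    have e4: "exp (4 * ?M) = E * E" unfolding E_def by (simp add: exp_add[symmetric])
    show ?thesis unfolding Bd_def b_def e4 E_def[symmetric] using E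
      by (simp add: field_simps power2_eq_square power4_eq_xxxx)
  qed
  have finU: "finite {\<bar>U i j\<bar> | i j. i < N \<and> j < N}"
  proof -
    have "{\<bar>U i j\<bar> | i j. i < N \<and> j < N} = (\<lambda>(i,j). \<bar>U i j\<bar>) ` ({..<N}\<times>{..<N})" by auto
    then show ?thesis by simp
  qed
  have finR: "finite {\<bar>R i j\<bar> | i j. i < N \<and> j < N}"
  proof -
    have "{\<bar>R i j\<bar> | i j. i < N \<and> j < N} = (\<lambda>(i,j). \<bar>R i j\<bar>) ` ({..<N}\<times>{..<N})" by auto
    then show ?thesis by simp
  qed
  have entry: "\<bar>U k l\<bar> \<le> max_norm N R + 3 * Bd" if k: "k < N" and l: "l < N" for k l
  proof -
    have "U k l = (\<Sum>r<N. \<Sum>s<N. R k r * fisherV m n theta r s * R l s)"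
      unfolding U_def N_def by (rule cov_formula)
    also have "\<dots> = (mat_inv N (fisherV m n theta) l k - approxS m n theta l k) - approxS m n theta k l
        + (\<Sum>r<N. \<Sum>s<N. approxS m n theta k r * fisherV m n theta r s * approxS m n theta l s)"
      unfolding R_def
      by (rule algebra_step) (use k l W_left[OF assms(1) n1] fisherV_sym in \<open>auto simp: N_def\<close>)
    also have "(\<Sum>r<N. \<Sum>s<N. approxS m n theta k r * fisherV m n theta r s * approxS m n theta l s) =
        (\<Sum>i<m. \<Sum>j<n. uij m n theta i j * sig m n (\<lambda>k. fisherV m n theta k k) (vlast m n theta) k i j
        * sig m n (\<lambda>k. fisherV m n theta k k) (vlast m n theta) l i j)"
      unfolding N_def by (rule Q_eq) (use assms k l in \<open>auto simp: N_def\<close>)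
    finally have Ueq: "U k l = R l k + ((\<Sum>i<m. \<Sum>j<n. uij m n theta i j * sig m n (\<lambda>k. fisherV m n theta k k) (vlast m n theta) k i j
        * sig m n (\<lambda>k. fisherV m n theta k k) (vlast m n theta) l i j) - approxS m n theta k l)"
      unfolding R_def by simp
    have D: "\<bar>(\<Sum>i<m. \<Sum>j<n. uij m n theta i j * sig m n (\<lambda>k. fisherV m n theta k k) (vlast m n theta) k i j
        * sig m n (\<lambda>k. fisherV m n theta k k) (vlast m n theta) l i j) - approxS m n theta k l\<bar> \<le> 2 * Bd"
      unfolding Bd_def by (rule D_bound[OF assms(1,2) _ _ b ub]) (use k l in \<open>auto simp: N_def\<close>)
    have Rle: "\<bar>R l k\<bar> \<le> max_norm N R"
      unfolding max_norm_def using finR k l by (intro Max_ge) auto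
    show ?thesis using Ueq D Rle Bd0 by linarith
  qed
  have "max_norm N U \<le> max_norm N R + 3 * Bd"
    unfolding max_norm_def[of N U]
    by (rule Max.boundedI[OF finU]) (use N1 entry in auto)
  then show ?thesis using BdE by simp
qed

end
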